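(* If $r$ is a nonzero integer and $n$ is a positive integer, then \[ 5F_r^2 \;\Big|\; (-1)^{r+1}F_{2r(n+1)}+(-1)^{r(n+1)}F_{2r}+F_{2rn}. \]
   Context: $F_n$ denotes the Fibonacci numbers, defined for all integers $n$ by $F_0=0,F_1=1$, $F_n=F_{n-1}+F_{n-2}$, with $F_{-n}=(-1)^{n-1}F_n$. *)

theory Defs
  imports "HOL-Number_Theory.Fib"
begin

definition fibz :: "int \<Rightarrow> int" where
  "fibz n = (if n \<ge> 0 then int (fib (nat n))
             else (-1) ^ (nat (-n) - 1) * int (fib (nat (-n))))"

end

theory Submission imports Defs begin

lemma pw1: fixes x :: real shows "x^(2*m*(n+1)) = x^m*x^m*(x^m)^n*(x^m)^n"
proof -
  have "2*m*(n+1) = m*(Suc (Suc (n+n)))" by simp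
  then have "x^(2*m*(n+1)) = (x^m)^(Suc (Suc (n+n)))" by (simp only: power_mult)
  then show ?thesis by (simp only: power_Suc power_add mult_ac)
qed
lemma pw2: fixes x :: real shows "x^(2*m) = x^m*x^m"
  by (simp add: mult_2 power_add)
lemma pw3: fixes x :: real shows "x^(2*m*n) = (x^m)^n*(x^m)^n"
proof -
  have "2*m*n = m*(n+n)" by simp
  then show ?thesis by (simp only: power_mult power_add)
qed
lemma pw4: fixes x :: real shows "x^(m*n) = (x^m)^n" by (simp only: power_mult)
lemma pw5: fixes x :: real shows "x^(m*(n+1)) = x^m*(x^m)^n" by (simp only: power_mult power_add power_one_right mult.commute)
lemma sg: "(-1::real)^(m*(n+1)) = ((-1)^m)^n * (-1)^m" by (simp only: power_mult power_add power_one_right)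

lemma comb3: fixes w::real assumes "w \<noteq> 0" shows "a*(A/w) + b*(B/w) + C/w = (a*A+b*B+C)/w"
  using assms by (simp add: field_simps)
lemma comb4: fixes w::real assumes "w*w = 5" "w \<noteq> 0" shows "a*5*(A/w)*(B/w)*(C/w) = a*A*B*C/w"
proof -
  have "a*5*(A/w)*(B/w)*(C/w) = a*A*B*C*(w*w)/(w*w*w)" using assms by (simp add: field_simps)
  also have "\<dots> = a*A*B*C/w" using assms(2) by simp
  finally show ?thesis .
qed

lemma key_real:
  fixes m n :: nat
  shows "(-1)^(m+1) * real (fib (2*m*(n+1))) + (-1)^(m*(n+1)) * real (fib (2*m)) + real (fib (2*m*n))
     = (-1)^(m+1) * 5 * real (fib m) * real (fib (m*n)) * real (fib (m*(n+1)))"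
proof -
  define \<phi> :: real where "\<phi> = (1 + sqrt 5) / 2"
  define \<psi> :: real where "\<psi> = (1 - sqrt 5) / 2"
  define w where "w = sqrt (5::real)"
  have w5: "w * w = 5" unfolding w_def by simp
  have wn: "w \<noteq> 0" unfolding w_def by simp
  have cf: "\<And>k. real (fib k) = (\<phi>^k - \<psi>^k) / w"
    unfolding \<phi>_def \<psi>_def w_def by (rule fib_closed_form)
  have pp: "\<phi> * \<psi> = -1" unfolding \<phi>_def \<psi>_def by (simp add: field_simps power2_eq_square)
  define u where "u = \<phi>^m"
  define v where "v = \<psi>^m"
  define s :: real where "s = (-1)^m"
  define p where "p = u^n"
  define q where "q = v^n"
  have uv: "u * v = s" unfolding u_def v_def s_def power_mult_distrib[symmetric] pp ..
  have ss: "s * s = 1" unfolding s_def power_mult_distrib[symmetric] by simp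
  have pq: "p * q = s^n" unfolding p_def q_def power_mult_distrib[symmetric] uv ..
  have sg1: "(-1::real)^(m+1) = - s" unfolding s_def by simp
  have sg2: "(-1::real)^(m*(n+1)) = p*q*s" unfolding sg pq s_def ..
  have X: "-s * (u*u*p*p - v*v*q*q) + p*q*s*(u*u - v*v) + (p*p - q*q)
      = -s * (u - v) * (p - q) * (u*p - v*q)"
  proof -
    have "-s * (u - v) * (p - q) * (u*p - v*q) = -s*(u*u*p*p - v*v*q*q) + s*(u*v)*(p*p-q*q) + s*(p*q)*(u*u-v*v)"
      by (simp add: algebra_simps)
    also have "\<dots> = -s*(u*u*p*p - v*v*q*q) + (p*p-q*q) + s*(p*q)*(u*u-v*v)"
      using uv ss by (simp add: mult.assoc[symmetric])
    finally show ?thesis by (simp add: algebra_simps)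
  qed
  have L: "(-1)^(m+1) * real (fib (2*m*(n+1))) + (-1)^(m*(n+1)) * real (fib (2*m)) + real (fib (2*m*n))
     = (-s * (u*u*p*p - v*v*q*q) + p*q*s*(u*u - v*v) + (p*p - q*q)) / w"
    unfolding cf pw1 pw2 pw3 sg1 sg2 comb3[OF wn] u_def[symmetric] v_def[symmetric] p_def[symmetric] q_def[symmetric]
    by (simp add: p_def q_def mult_ac)
  have R: "(-1)^(m+1) * 5 * real (fib m) * real (fib (m*n)) * real (fib (m*(n+1)))
     = (-s * (u - v) * (p - q) * (u*p - v*q)) / w"
    unfolding cf pw4 pw5 sg1 comb4[OF w5 wn] u_def[symmetric] v_def[symmetric] p_def[symmetric] q_def[symmetric]
    by (simp add: p_def q_def mult_ac)
  show ?thesis using L R X by simp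
qed

lemma key_int:
  fixes m n :: nat
  shows "(-1)^(m+1) * int (fib (2*m*(n+1))) + (-1)^(m*(n+1)) * int (fib (2*m)) + int (fib (2*m*n))
     = (-1)^(m+1) * 5 * int (fib m) * int (fib (m*n)) * int (fib (m*(n+1)))"
proof -
  have "real_of_int ((-1)^(m+1) * int (fib (2*m*(n+1))) + (-1)^(m*(n+1)) * int (fib (2*m)) + int (fib (2*m*n)))
     = real_of_int ((-1)^(m+1) * 5 * int (fib m) * int (fib (m*n)) * int (fib (m*(n+1))))"
    using key_real[of m n] by simp
  then show ?thesis by (simp only: of_int_eq_iff)
qed

lemma fib_dvd_mult: "fib m dvd fib (m * k)"
proof -
  have "fib (gcd m (m*k)) = gcd (fib m) (fib (m*k))" by (rule fib_gcd)
  then have "fib m = gcd (fib m) (fib (m*k))" by simp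
  then show ?thesis by (metis gcd_dvd2)
qed

lemma dvd_E: "5 * (int (fib m))^2 dvd (-1)^(m+1) * int (fib (2*m*(n+1))) + (-1)^(m*(n+1)) * int (fib (2*m)) + int (fib (2*m*n))"
proof -
  have "int (fib m) dvd int (fib (m*n))" using fib_dvd_mult[of m n] by simp
  then obtain c where c: "int (fib (m*n)) = int (fib m) * c" by (elim dvdE) blast
  show ?thesis unfolding key_int c
    by (rule dvdI[where k="(-1)^(m+1) * c * int (fib (m*(n+1)))"]) (simp add: power2_eq_square mult_ac)
qed

lemma fibz_pos: "fibz (int k) = int (fib k)" unfolding fibz_def by simp
lemma fibz_neg: "fibz (- int k) = (-1)^(k-1) * int (fib k)" unfolding fibz_def by (cases "k = 0") auto

theorem mainTheorem7:
  fixes r :: int and n :: nat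
  assumes "r \<noteq> 0" and "n > 0"
  shows "5 * (fibz r)^2 dvd
    (-1) ^ nat \<bar>r + 1\<bar> * fibz (2 * r * (int n + 1))
    + (-1) ^ nat \<bar>r * (int n + 1)\<bar> * fibz (2 * r)
    + fibz (2 * r * int n)"
proof (cases "r > 0")
  case True
  then obtain m where m: "r = int m" "m > 0" by (metis pos_int_cases)
  have i1: "2 * r * (int n + 1) = int (2*m*(n+1))" "2*r = int (2*m)" "2 * r * int n = int (2*m*n)"
    using m by (auto simp: algebra_simps)
  have i2: "nat \<bar>r + 1\<bar> = m+1" "nat \<bar>r * (int n + 1)\<bar> = m*(n+1)" using m by (auto simp: abs_mult nat_mult_distrib nat_add_distrib)
  have fr: "fibz r = int (fib m)" using m fibz_pos by simp
  have e: "(-1) ^ nat \<bar>r + 1\<bar> * fibz (2 * r * (int n + 1))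
    + (-1) ^ nat \<bar>r * (int n + 1)\<bar> * fibz (2 * r)
    + fibz (2 * r * int n) = (-1)^(m+1) * int (fib (2*m*(n+1))) + (-1)^(m*(n+1)) * int (fib (2*m)) + int (fib (2*m*n))"
  proof -
    have f: "fibz (2 * r * (int n + 1)) = int (fib (2*m*(n+1)))" "fibz (2*r) = int (fib (2*m))"
      "fibz (2 * r * int n) = int (fib (2*m*n))"
      by (simp only: i1(1) fibz_pos, simp only: i1(2) fibz_pos, simp only: i1(3) fibz_pos)
    show ?thesis by (simp only: f i2)
  qed
  show ?thesis unfolding e fr using dvd_E[of m n] by simp
next
  case False
  with assms obtain m where m: "r = - int m" "m > 0" by (metis neg_int_cases not_less_iff_gr_or_eq)
  have i1: "2 * r * (int n + 1) = - int (2*m*(n+1))" "2*r = - int (2*m)" "2 * r * int n = - int (2*m*n)"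
    using m by (auto simp: algebra_simps)
  have i2: "nat \<bar>r + 1\<bar> = m - 1" "nat \<bar>r * (int n + 1)\<bar> = m*(n+1)" using m by (auto simp: abs_mult nat_mult_distrib nat_add_distrib)
  have ev: "\<And>k::nat. k > 0 \<Longrightarrow> (-1::int)^(2*k - 1) = -1"
  proof -
    fix k :: nat assume "k > 0"
    then obtain j where "k = Suc j" using gr0_implies_Suc by blast
    then have "2*k - 1 = Suc (2*j)" by simp
    then show "(-1::int)^(2*k - 1) = -1" by simp
  qed
  have s1: "(-1::int)^(m-1) = (-1)^(m+1)"
  proof -
    obtain j where j: "m = Suc j" using m(2) gr0_implies_Suc by blast
    show ?thesis unfolding j by simp
  qed
  have s2: "(-1::int)^(m - Suc 0) = - ((-1)^m)" using s1 by simp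
  have sq: "(fibz r)^2 = (int (fib m))^2" unfolding m(1) fibz_neg by (simp add: power_mult_distrib power_mult[symmetric])
  have e: "(-1) ^ nat \<bar>r + 1\<bar> * fibz (2 * r * (int n + 1))
    + (-1) ^ nat \<bar>r * (int n + 1)\<bar> * fibz (2 * r)
    + fibz (2 * r * int n) = - ((-1)^(m+1) * int (fib (2*m*(n+1))) + (-1)^(m*(n+1)) * int (fib (2*m)) + int (fib (2*m*n)))"
  proof -
    have f1: "fibz (2 * r * (int n + 1)) = - int (fib (2*m*(n+1)))"
      unfolding i1(1) fibz_neg using ev[of "m*(n+1)"] m by (simp add: mult.assoc)
    have f2: "fibz (2*r) = - int (fib (2*m))"
      unfolding i1(2) fibz_neg using ev[of m] m by simp
    have f3: "fibz (2 * r * int n) = - int (fib (2*m*n))"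
      unfolding i1(3) fibz_neg using ev[of "m*n"] m assms(2) by (simp add: mult.assoc)
    note f = f1 f2 f3
    show ?thesis by (simp add: f i2 s1 s2)
  qed
  show ?thesis unfolding e sq dvd_minus_iff by (rule dvd_E)
qed

end
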